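(* Let $F$ be a field of characteristic zero and let $A$ be a $\#$-superalgebra over $F$. Then for every $n\geq 1$, $$c_n^{grs}(A)\leq 4^n c_n(A).$$
   Context: All algebras are associative over $F$. A superalgebra is $A=A_0\oplus A_1$ with $A_iA_j\subseteq A_{(i+j)\bmod 2}$; $\deg a=i$ for $0\ne a\in A_i$. A superinvolution is an $F$-linear map $\#:A\to A$ with $A_i^\#\subseteq A_i$, $(c^\#)^\#=c$ and $(ab)^\#=(-1)^{\deg a\deg b}b^\#a^\#$ for homogeneous $a,b$; a graded involution is an $F$-linear map $\#$ with $A_i^\#\subseteq A_i$, $(c^\#)^\#=c$, $(ab)^\#=b^\#a^\#$. A $\#$-superalgebra is a superalgebra with a superinvolution or a graded involution $\#$. Put $A_i^{+}=\{a\in A_i:a^\#=a\}$, $A_i^-=\{a\in A_i:a^\#=-a\}$. Let $\mathcal F$ be the free non-unital associative algebra on $X=Y_0\cup Z_0\cup Y_1\cup Z_1$, $Y_i=\{y_{i,1},y_{i,2},\dots\}$, $Z_i=\{z_{i,1},z_{i,2},\dots\}$, where variables in $Y_i\cup Z_i$ have $\mathbb Z_2$-degree $i$, and $\#$ is defined by $y_{i,j}^\#=y_{i,j}$, $z_{i,j}^\#=-z_{i,j}$ and, on monomials, $(x_{i_1}\cdots x_{i_k})^\#=(-1)^{s(s-1)/2}x_{i_k}^\#\cdots x_{i_1}^\#$ ($s$ = number of odd variables) in the superinvolution case, resp. $(x_{i_1}\cdots x_{i_k})^\#=x_{i_k}^\#\cdots x_{i_1}^\#$ in the graded involution case, extended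 linearly. A polynomial $f\in\mathcal F$ is a $\#$-superidentity of $A$ if it vanishes under every substitution of variables $y_{0,j},z_{0,j},y_{1,j},z_{1,j}$ by elements of $A_0^+,A_0^-,A_1^+,A_1^-$ respectively; $Id_2^\#(A)$ is the set of these. $P_n^{grs}$ is the span of all monomials $w_{\sigma(1)}\cdots w_{\sigma(n)}$, $\sigma\in S_n$, $w_i\in\{y_{0,i},z_{0,i},y_{1,i},z_{1,i}\}$, and $c_n^{grs}(A)=\dim P_n^{grs}/(P_n^{grs}\cap Id_2^\#(A))$. $P_n$ is the space of ordinary multilinear polynomials in $x_1,\dots,x_n$, $Id(A)$ the ordinary polynomial identities of $A$, and $c_n(A)=\dim P_n/(P_n\cap Id(A))$. *)

theory Defs
  imports Complex_Main "HOL-Library.FuncSet" "HOL-Library.Function_Algebras" "HOL-Combinatorics.Permutations"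
begin

fun mprod :: "'a::semigroup_mult list \<Rightarrow> 'a" where
  "mprod [] = undefined"
| "mprod [x] = x"
| "mprod (x # y # xs) = x * mprod (y # xs)"

definition sharp_superalgebra ::
  "('f::field \<Rightarrow> 'a::ring \<Rightarrow> 'a) \<Rightarrow> 'a set \<Rightarrow> 'a set \<Rightarrow> ('a \<Rightarrow> 'a) \<Rightarrow> bool" where
  "sharp_superalgebra smul A0 A1 sh \<longleftrightarrow>
     vector_space smul \<and>
     (\<forall>c a b. smul c (a * b) = smul c a * b \<and> smul c (a * b) = a * smul c b) \<and>
     module.subspace smul A0 \<and> module.subspace smul A1 \<and>
     A0 \<inter> A1 = {0} \<and> (\<forall>a. \<exists>a0\<in>A0. \<exists>a1\<in>A1. a = a0 + a1) \<and>
     (\<forall>a\<in>A0. \<forall>b\<in>A0. a * b \<in> A0) \<and> (\<forall>a\<in>A0. \<forall>b\<in>A1. a * b \<in> A1) \<and>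
     (\<forall>a\<in>A1. \<forall>b\<in>A0. a * b \<in> A1) \<and> (\<forall>a\<in>A1. \<forall>b\<in>A1. a * b \<in> A0) \<and>
     Vector_Spaces.linear smul smul sh \<and> sh ` A0 \<subseteq> A0 \<and> sh ` A1 \<subseteq> A1 \<and>
     (\<forall>a. sh (sh a) = a) \<and>
     ( \<comment> \<open>superinvolution\<close>
       ((\<forall>a\<in>A0. \<forall>b\<in>A0 \<union> A1. sh (a * b) = sh b * sh a) \<and>
        (\<forall>a\<in>A1. \<forall>b\<in>A0. sh (a * b) = sh b * sh a) \<and>
        (\<forall>a\<in>A1. \<forall>b\<in>A1. sh (a * b) = - (sh b * sh a)))
     \<or> \<comment> \<open>graded involution\<close>
       (\<forall>a b. sh (a * b) = sh b * sh a))"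

definition fdim :: "('i \<Rightarrow> 'f::field) set \<Rightarrow> nat" where
  "fdim V = vector_space.dim (\<lambda>(c::'f) (f::'i \<Rightarrow> 'f) x. c * f x) V"

text \<open>Ordinary multilinear polynomials P_n: the element
  sum_sigma f(sigma) x_{sigma(0)} ... x_{sigma(n-1)} is encoded by its coefficient
  function f on permutations of {0..<n} (variables indexed from 0).\<close>
definition Pn :: "nat \<Rightarrow> ((nat \<Rightarrow> nat) \<Rightarrow> 'f::field) set" where
  "Pn n = {f. \<forall>\<sigma>. \<not> \<sigma> permutes {..<n} \<longrightarrow> f \<sigma> = 0}"

definition eval_ord :: "('f::field \<Rightarrow> 'a::ring \<Rightarrow> 'a) \<Rightarrow> nat \<Rightarrow> ((nat \<Rightarrow> nat) \<Rightarrow> 'f) \<Rightarrow> (nat \<Rightarrow> 'a) \<Rightarrow> 'a" where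
  "eval_ord smul n f a = (\<Sum>\<sigma> \<in> {\<sigma>. \<sigma> permutes {..<n}}. smul (f \<sigma>) (mprod (map (\<lambda>j. a (\<sigma> j)) [0..<n])))"

definition IdPn :: "('f::field \<Rightarrow> 'a::ring \<Rightarrow> 'a) \<Rightarrow> nat \<Rightarrow> ((nat \<Rightarrow> nat) \<Rightarrow> 'f) set" where
  "IdPn smul n = {f \<in> Pn n. \<forall>a. eval_ord smul n f a = 0}"

text \<open>c_n(A) = dim P_n/(P_n \<inter> Id(A)) = dim P_n - dim (P_n \<inter> Id(A)).\<close>
definition cn :: "('f::field \<Rightarrow> 'a::ring \<Rightarrow> 'a) \<Rightarrow> nat \<Rightarrow> nat" where
  "cn smul n = fdim (Pn n :: ((nat \<Rightarrow> nat) \<Rightarrow> 'f) set) - fdim (IdPn smul n)"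

datatype vkind = Y0 | Z0 | Y1 | Z1

definition kind_space :: "'a set \<Rightarrow> 'a set \<Rightarrow> ('a \<Rightarrow> 'a) \<Rightarrow> vkind \<Rightarrow> 'a::ab_group_add set" where
  "kind_space A0 A1 sh k = (case k of
      Y0 \<Rightarrow> {a \<in> A0. sh a = a} | Z0 \<Rightarrow> {a \<in> A0. sh a = - a}
    | Y1 \<Rightarrow> {a \<in> A1. sh a = a} | Z1 \<Rightarrow> {a \<in> A1. sh a = - a})"

text \<open>Index set of the monomial basis of P_n^{grs}: a permutation sigma and a choice
  t(i) of the kind of w_i for each i < n; the monomial is
  w_{sigma(0)} ... w_{sigma(n-1)} with w_i of kind t(i).\<close>
definition GIdx :: "nat \<Rightarrow> ((nat \<Rightarrow> nat) \<times> (nat \<Rightarrow> vkind)) set" where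
  "GIdx n = {\<sigma>. \<sigma> permutes {..<n}} \<times> ({..<n} \<rightarrow>\<^sub>E (UNIV :: vkind set))"

definition GPn :: "nat \<Rightarrow> (((nat \<Rightarrow> nat) \<times> (nat \<Rightarrow> vkind)) \<Rightarrow> 'f::field) set" where
  "GPn n = {f. \<forall>p. p \<notin> GIdx n \<longrightarrow> f p = 0}"

text \<open>Evaluation under the substitution w_i of kind k |-> b i k.\<close>
definition eval_grs :: "('f::field \<Rightarrow> 'a::ring \<Rightarrow> 'a) \<Rightarrow> nat \<Rightarrow>
    (((nat \<Rightarrow> nat) \<times> (nat \<Rightarrow> vkind)) \<Rightarrow> 'f) \<Rightarrow> (nat \<Rightarrow> vkind \<Rightarrow> 'a) \<Rightarrow> 'a" where
  "eval_grs smul n f b = (\<Sum>(\<sigma>, t) \<in> GIdx n.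
      smul (f (\<sigma>, t)) (mprod (map (\<lambda>j. b (\<sigma> j) (t (\<sigma> j))) [0..<n])))"

definition IdGPn :: "('f::field \<Rightarrow> 'a::ring \<Rightarrow> 'a) \<Rightarrow> 'a set \<Rightarrow> 'a set \<Rightarrow> ('a \<Rightarrow> 'a) \<Rightarrow> nat \<Rightarrow>
    (((nat \<Rightarrow> nat) \<times> (nat \<Rightarrow> vkind)) \<Rightarrow> 'f) set" where
  "IdGPn smul A0 A1 sh n = {f \<in> GPn n.
      \<forall>b. (\<forall>i k. b i k \<in> kind_space A0 A1 sh k) \<longrightarrow> eval_grs smul n f b = 0}"

definition cn_grs :: "('f::field \<Rightarrow> 'a::ring \<Rightarrow> 'a) \<Rightarrow> 'a set \<Rightarrow> 'a set \<Rightarrow> ('a \<Rightarrow> 'a) \<Rightarrow> nat \<Rightarrow> nat" where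
  "cn_grs smul A0 A1 sh n =
     fdim (GPn n :: (((nat \<Rightarrow> nat) \<times> (nat \<Rightarrow> vkind)) \<Rightarrow> 'f) set) - fdim (IdGPn smul A0 A1 sh n)"

end

theory Submission
  imports Defs
begin

interpretation fv: vector_space "\<lambda>(c::'f::field) (f::'i\<Rightarrow>'f) x. c * f x"
  by unfold_locales (simp_all add: fun_eq_iff algebra_simps)

lemma fdim_eq: "fdim V = fv.dim V"
  unfolding fdim_def by simp

lemma sum_fun_apply: "(\<Sum>x\<in>A. f x) y = (\<Sum>x\<in>A. f x y)"
  by (induction A rule: infinite_finite_induct) auto

definition liftk :: "'k \<Rightarrow> ('i \<Rightarrow> 'f::field) \<Rightarrow> ('i \<times> 'k \<Rightarrow> 'f)" where
  "liftk t f = (\<lambda>(s,t'). if t' = t then f s else 0)"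

definition slice :: "'k \<Rightarrow> ('i \<times> 'k \<Rightarrow> 'f::field) \<Rightarrow> ('i \<Rightarrow> 'f)" where
  "slice t g = (\<lambda>s. g (s,t))"

definition LiftS :: "('i \<Rightarrow> 'f::field) set \<Rightarrow> 'k set \<Rightarrow> ('i \<times> 'k \<Rightarrow> 'f) set" where
  "LiftS V K = {g. (\<forall>s t. t \<notin> K \<longrightarrow> g (s,t) = 0) \<and> (\<forall>t\<in>K. slice t g \<in> V)}"

definition LB :: "'k set \<Rightarrow> ('i \<Rightarrow> 'f::field) set \<Rightarrow> ('i \<times> 'k \<Rightarrow> 'f) set" where
  "LB K B = (\<lambda>(t,f). liftk t f) ` (K \<times> B)"

lemma liftk_in_span:
  fixes B :: "('i \<Rightarrow> 'f::field) set" and K :: "'k set"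
  assumes "t \<in> K" "x \<in> fv.span B"
  shows "liftk t x \<in> fv.span (LB K B)"
  using assms(2)
proof (induction rule: fv.span_induct_alt)
  case base
  have "liftk t (0::'i\<Rightarrow>'f) = 0" by (auto simp: liftk_def fun_eq_iff)
  then show ?case using fv.span_zero by metis
next
  case (step c x y)
  have e: "liftk t ((\<lambda>s. c * x s) + y) = (\<lambda>p. c * liftk t x p) + liftk t y"
    by (auto simp: liftk_def fun_eq_iff)
  have "liftk t x \<in> LB K B" using step assms(1) by (auto simp: LB_def)
  then have "(\<lambda>p. c * liftk t x p) \<in> fv.span (LB K B)"
    using fv.span_scale fv.span_base by metis
  then show ?case unfolding e using step by (intro fv.span_add) 
qed

lemma lift_upper:
  fixes B V :: "('i \<Rightarrow> 'f::field) set" and K :: "'k set"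
  assumes "finite K" "V \<subseteq> fv.span B"
  shows "LiftS V K \<subseteq> fv.span (LB K B)"
proof
  fix g :: "'i \<times> 'k \<Rightarrow> 'f" assume g: "g \<in> LiftS V K"
  have "g = (\<Sum>t\<in>K. liftk t (slice t g))"
  proof
    fix p :: "'i \<times> 'k"
    obtain s t0 where p: "p = (s,t0)" by force
    have "(\<Sum>t\<in>K. liftk t (slice t g)) p = (\<Sum>t\<in>K. if t0 = t then g (s,t) else 0)"
      unfolding p sum_fun_apply by (simp add: liftk_def slice_def)
    also have "\<dots> = (if t0 \<in> K then g (s,t0) else 0)"
      using assms(1) by (simp add: sum.delta)
    also have "\<dots> = g p" using g p by (auto simp: LiftS_def)
    finally show "g p = (\<Sum>t\<in>K. liftk t (slice t g)) p" by simp
  qed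
  also have "\<dots> \<in> fv.span (LB K B)"
    using g assms by (intro fv.span_sum liftk_in_span) (auto simp: LiftS_def)
  finally show "g \<in> fv.span (LB K B)" .
qed

lemma liftk_inj: "inj (liftk t)"
proof
  fix f f' :: "'i \<Rightarrow> 'f::field" assume "liftk t f = liftk t f'"
  then have "\<And>s. liftk t f (s,t) = liftk t f' (s,t)" by simp
  then show "f = f'" by (auto simp: liftk_def fun_eq_iff)
qed

lemma lift_lower:
  fixes B V :: "('i \<Rightarrow> 'f::field) set" and K :: "'k set"
  assumes indep: "fv.independent B" and BV: "B \<subseteq> V" and V0: "0 \<in> V"
  shows "LB K B \<subseteq> LiftS V K" "fv.independent (LB K B)" "card (LB K B) = card K * card B"
proof -
  have B0: "0 \<notin> B" using indep fv.dependent_zero by blast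
  show "LB K B \<subseteq> LiftS V K"
  proof
    fix g assume "g \<in> LB K B"
    then obtain t f where g: "g = liftk t f" "t \<in> K" "f \<in> B" by (auto simp: LB_def)
    have "slice t' g = (if t' = t then f else 0)" for t'
      using g by (auto simp: slice_def liftk_def fun_eq_iff)
    then show "g \<in> LiftS V K" using g BV V0 by (auto simp: LiftS_def liftk_def)
  qed
  have inj: "inj_on (\<lambda>(t,f). liftk t f) (K \<times> B)"
  proof (rule inj_onI, clarify)
    fix t f t' f' assume a: "t \<in> K" "f \<in> B" "t' \<in> K" "f' \<in> B" "liftk t f = liftk t' f'"
    from a B0 obtain s where s: "f s \<noteq> 0" by (metis ext zero_fun_apply)
    have "liftk t f (s,t) = liftk t' f' (s,t)" using a by simp
    then have tt: "t = t'" using s by (auto simp: liftk_def split: if_splits)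
    then show "t = t' \<and> f = f'" using a liftk_inj[of t] by (auto dest: injD)
  qed
  then show "card (LB K B) = card K * card B"
    unfolding LB_def by (simp add: card_image card_cartesian_product)
  show "fv.independent (LB K B)"
    unfolding fv.independent_explicit_module
  proof (intro allI impI)
    fix T u v
    assume T: "finite T" "T \<subseteq> LB K B" and S: "(\<Sum>v\<in>T. (\<lambda>x. u v * v x)) = 0" and v: "v \<in> T"
    obtain t0 f0 where v0: "v = liftk t0 f0" "t0 \<in> K" "f0 \<in> B" using v T by (auto simp: LB_def)
    define T0 where "T0 = liftk t0 -` T \<inter> B"
    have finT0: "finite T0" unfolding T0_def using T(1) liftk_inj
      by (intro finite_Int disjI1 finite_vimageI) auto
    have "(\<Sum>f\<in>T0. (\<lambda>x. u (liftk t0 f) * f x)) = 0"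
    proof
      fix s
      have "(\<Sum>f\<in>T0. (\<lambda>x. u (liftk t0 f) * f x)) s = (\<Sum>f\<in>T0. u (liftk t0 f) * liftk t0 f (s,t0))"
        unfolding sum_fun_apply by (simp add: liftk_def)
      also have "\<dots> = (\<Sum>w\<in>liftk t0 ` T0. u w * w (s,t0))"
        using liftk_inj[of t0] by (subst sum.reindex) (auto intro: inj_on_subset)
      also have "\<dots> = (\<Sum>w\<in>T. u w * w (s,t0))"
      proof (rule sum.mono_neutral_left[OF T(1)])
        show "liftk t0 ` T0 \<subseteq> T" unfolding T0_def by auto
        show "\<forall>i\<in>T - liftk t0 ` T0. u i * i (s, t0) = 0"
        proof
          fix w assume w: "w \<in> T - liftk t0 ` T0"
          then obtain t f where tf: "w = liftk t f" "f \<in> B" using T by (auto simp: LB_def)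
          have "t \<noteq> t0" using w tf unfolding T0_def by auto
          then show "u w * w (s, t0) = 0" using tf by (simp add: liftk_def)
        qed
      qed
      also have "\<dots> = 0" using fun_cong[OF S, of "(s,t0)"] unfolding sum_fun_apply by simp
      finally show "(\<Sum>f\<in>T0. (\<lambda>x. u (liftk t0 f) * f x)) s = 0 s" by simp
    qed
    moreover have "f0 \<in> T0" using v v0 unfolding T0_def by auto
    ultimately have "u (liftk t0 f0) = 0"
      using fv.independentD[OF indep finT0, of "\<lambda>f. u (liftk t0 f)"] T0_def by auto
    then show "u v = 0" using v0 by simp
  qed
qed

lemma dim_lift_le:
  fixes C V :: "('i \<Rightarrow> 'f::field) set" and K :: "'k set"
  assumes "finite K" "finite C" "V \<subseteq> fv.span C"
  shows "fv.dim (LiftS V K) \<le> card K * card C"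
proof -
  have fin: "finite (LB K C)" unfolding LB_def using assms by auto
  have "fv.dim (LiftS V K) \<le> card (LB K C)"
    using fv.dim_le_card[OF lift_upper[OF assms(1,3)] fin] .
  also have "\<dots> \<le> card (K \<times> C)" unfolding LB_def by (rule card_image_le) (use assms in auto)
  finally show ?thesis by (simp add: card_cartesian_product)
qed

lemma card_le_dim:
  fixes S W F :: "('i \<Rightarrow> 'f::field) set"
  assumes "fv.independent S" "S \<subseteq> W" "W \<subseteq> fv.span F" "finite F"
  shows "card S \<le> fv.dim W"
proof -
  obtain E where E: "E \<subseteq> W" "fv.independent E" "W \<subseteq> fv.span E" "card E = fv.dim W"
    using fv.basis_exists by blast
  have "finite E" using fv.independent_span_bound[OF assms(4) E(2)] E(1) assms(3) by blast
  then have "card S \<le> card E" using fv.independent_span_bound[OF _ assms(1)] assms(2) E(3) by blast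
  then show ?thesis using E by simp
qed

lemma UNIV_vkind: "(UNIV :: vkind set) = {Y0, Z0, Y1, Z1}"
  by (auto intro: vkind.exhaust)

lemma card_vkind: "card (UNIV :: vkind set) = 4"
  unfolding UNIV_vkind by simp

lemma finite_vkind: "finite (UNIV :: vkind set)"
  unfolding UNIV_vkind by simp

theorem lemma2p2:
  fixes smul :: "'f::field_char_0 \<Rightarrow> 'a::ring \<Rightarrow> 'a"
    and A0 A1 :: "'a set" and sh :: "'a \<Rightarrow> 'a" and n :: nat
  assumes "sharp_superalgebra smul A0 A1 sh"
    and "n \<ge> 1"
  shows "cn_grs smul A0 A1 sh n \<le> 4 ^ n * cn smul n"
proof -
  have vs: "vector_space smul" using assms(1) by (simp add: sharp_superalgebra_def)
  define P where "P = {\<sigma>. \<sigma> permutes {..<n}}"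
  define K where "K = ({..<n} \<rightarrow>\<^sub>E (UNIV :: vkind set))"
  have finP: "finite P" unfolding P_def by (simp add: finite_permutations)
  have finK: "finite K" unfolding K_def by (simp add: finite_PiE finite_vkind)
  have cardK: "card K = 4 ^ n" unfolding K_def by (simp add: card_PiE card_vkind)
  have GP: "(GPn n :: (((nat \<Rightarrow> nat) \<times> (nat \<Rightarrow> vkind)) \<Rightarrow> 'f) set) = LiftS (Pn n) K"
    unfolding GPn_def LiftS_def Pn_def GIdx_def K_def P_def slice_def by (auto; metis)
  have IdP_sub: "IdPn smul n \<subseteq> Pn n" unfolding IdPn_def by auto
  have IdP0: "0 \<in> IdPn smul n"
    proof -
    interpret V: vector_space smul by (rule vs)
    show ?thesis unfolding IdPn_def Pn_def eval_ord_def by simp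
  qed
  have IdG: "LiftS (IdPn smul n) K \<subseteq> IdGPn smul A0 A1 sh n"
  proof
    fix g :: "((nat \<Rightarrow> nat) \<times> (nat \<Rightarrow> vkind)) \<Rightarrow> 'f"
    assume g: "g \<in> LiftS (IdPn smul n) K"
    have "g \<in> GPn n" using g IdP_sub unfolding GP LiftS_def by auto
    moreover have "eval_grs smul n g b = 0" for b
    proof -
      have "eval_grs smul n g b = (\<Sum>(\<sigma>, t) \<in> P \<times> K.
          smul (g (\<sigma>, t)) (mprod (map (\<lambda>j. b (\<sigma> j) (t (\<sigma> j))) [0..<n])))"
        unfolding eval_grs_def GIdx_def P_def K_def by simp
      also have "\<dots> = (\<Sum>\<sigma>\<in>P. \<Sum>t\<in>K.
          smul (g (\<sigma>, t)) (mprod (map (\<lambda>j. b (\<sigma> j) (t (\<sigma> j))) [0..<n])))"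
        by (rule sum.cartesian_product[symmetric])
      also have "\<dots> = (\<Sum>t\<in>K. \<Sum>\<sigma>\<in>P.
          smul (g (\<sigma>, t)) (mprod (map (\<lambda>j. b (\<sigma> j) (t (\<sigma> j))) [0..<n])))"
        by (rule sum.swap)
      also have "\<dots> = (\<Sum>t\<in>K. eval_ord smul n (slice t g) (\<lambda>i. b i (t i)))"
        unfolding eval_ord_def slice_def P_def by simp
      also have "\<dots> = 0"
        using g by (intro sum.neutral) (auto simp: LiftS_def IdPn_def)
      finally show ?thesis .
    qed
    ultimately show "g \<in> IdGPn smul A0 A1 sh n" unfolding IdGPn_def by auto
  qed
  define F0 where "F0 = (\<lambda>\<sigma>. (\<lambda>\<tau>. if \<tau> = \<sigma> then 1 else 0) :: (nat \<Rightarrow> nat) \<Rightarrow> 'f) ` P"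
  have finF0: "finite F0" unfolding F0_def using finP by simp
  have PF0: "Pn n \<subseteq> fv.span F0"
  proof
    fix f :: "(nat \<Rightarrow> nat) \<Rightarrow> 'f" assume f: "f \<in> Pn n"
    have "f = (\<Sum>\<sigma>\<in>P. (\<lambda>x. f \<sigma> * (\<lambda>\<tau>. if \<tau> = \<sigma> then 1 else 0) x))"
    proof
      fix x
      have "(\<Sum>\<sigma>\<in>P. (\<lambda>x. f \<sigma> * (\<lambda>\<tau>. if \<tau> = \<sigma> then 1 else 0) x)) x
          = (\<Sum>\<sigma>\<in>P. if x = \<sigma> then f \<sigma> else 0)"
        unfolding sum_fun_apply by (intro sum.cong) auto
      also have "\<dots> = (if x \<in> P then f x else 0)" using finP by (simp add: sum.delta)
      also have "\<dots> = f x" using f by (auto simp: Pn_def P_def)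
      finally show "f x = (\<Sum>\<sigma>\<in>P. (\<lambda>x. f \<sigma> * (\<lambda>\<tau>. if \<tau> = \<sigma> then 1 else 0) x)) x" by simp
    qed
    also have "\<dots> \<in> fv.span F0"
      unfolding F0_def by (intro fv.span_sum fv.span_scale fv.span_base) auto
    finally show "f \<in> fv.span F0" .
  qed
  obtain C :: "((nat \<Rightarrow> nat) \<Rightarrow> 'f) set" where C: "C \<subseteq> Pn n" "fv.independent C" "Pn n \<subseteq> fv.span C" "card C = fv.dim (Pn n :: ((nat \<Rightarrow> nat) \<Rightarrow> 'f) set)"
    by (rule fv.basis_exists[of "Pn n :: ((nat \<Rightarrow> nat) \<Rightarrow> 'f) set"])
  have finC: "finite C" using fv.independent_span_bound[OF finF0 C(2)] C(1) PF0 by blast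
  obtain D where D: "D \<subseteq> IdPn smul n" "fv.independent D" "IdPn smul n \<subseteq> fv.span D" "card D = fv.dim (IdPn smul n)"
    by (rule fv.basis_exists[of "IdPn smul n"])
  have dG: "fv.dim (GPn n :: (((nat \<Rightarrow> nat) \<times> (nat \<Rightarrow> vkind)) \<Rightarrow> 'f) set) \<le> 4 ^ n * fv.dim (Pn n :: ((nat \<Rightarrow> nat) \<Rightarrow> 'f) set)"
    using dim_lift_le[OF finK finC C(3)] unfolding GP cardK C(4) .
  have LD: "LB K D \<subseteq> IdGPn smul A0 A1 sh n"
    using lift_lower(1)[OF D(2) D(1) IdP0] IdG by blast
  have IdGsub: "IdGPn smul A0 A1 sh n \<subseteq> fv.span (LB K C)"
    using lift_upper[OF finK C(3)] unfolding GP[symmetric] IdGPn_def by auto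
  have finLC: "finite (LB K C)" unfolding LB_def using finK finC by auto
  have dI: "4 ^ n * fv.dim (IdPn smul n) \<le> fv.dim (IdGPn smul A0 A1 sh n)"
    using card_le_dim[OF lift_lower(2)[OF D(2) D(1) IdP0] LD IdGsub finLC]
    unfolding lift_lower(3)[OF D(2) D(1) IdP0] cardK D(4) .
  have "cn_grs smul A0 A1 sh n \<le> 4 ^ n * fv.dim (Pn n :: ((nat \<Rightarrow> nat) \<Rightarrow> 'f) set) - 4 ^ n * fv.dim (IdPn smul n)"
    unfolding cn_grs_def fdim_eq using dG dI by linarith
  also have "\<dots> = 4 ^ n * cn smul n"
    unfolding cn_def fdim_eq by (simp add: diff_mult_distrib2)
  finally show ?thesis .
qed

end
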